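(* For a real square matrix $A$, the following are equivalent: (i) $A$ is a WCDD Z-matrix with positive diagonal entries; (ii) $A$ is a WDD M-matrix.
   Context: For a complex $M\times M$ matrix $A=(a_{ij})$: row $i$ is strictly diagonally dominant (SDD) if $|a_{ii}|>\sum_{j\neq i}|a_{ij}|$, and weakly diagonally dominant (WDD) if $|a_{ii}|\geq\sum_{j\neq i}|a_{ij}|$; $A$ is SDD (resp. WDD) if all its rows are. The directed graph of $A$ has vertices $\{1,\dots,M\}$ and an edge $i\to j$ iff $a_{ij}\neq 0$; a path may be trivial (length zero). $A$ is WCDD if it is WDD and for each row $r$ there is a path in the graph of $A$ from $r$ to some SDD row. A real square matrix $A$ is monotone (in the sense of Collatz) if for every real vector $v$, $Av\geq 0$ (componentwise) implies $v\geq 0$. A Z-matrix is a real matrix with nonpositive off-diagonal entries. An M-matrix is a monotone Z-matrix. *)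

theory Defs
  imports "HOL-Analysis.Analysis"
begin

definition sdd_row :: "real^'n^'n \<Rightarrow> 'n \<Rightarrow> bool" where
  "sdd_row A i \<longleftrightarrow> \<bar>A $ i $ i\<bar> > (\<Sum>j\<in>UNIV - {i}. \<bar>A $ i $ j\<bar>)"

definition wdd_row :: "real^'n^'n \<Rightarrow> 'n \<Rightarrow> bool" where
  "wdd_row A i \<longleftrightarrow> \<bar>A $ i $ i\<bar> \<ge> (\<Sum>j\<in>UNIV - {i}. \<bar>A $ i $ j\<bar>)"

definition wdd :: "real^'n^'n \<Rightarrow> bool" where
  "wdd A \<longleftrightarrow> (\<forall>i. wdd_row A i)"

definition mat_graph :: "real^'n^'n \<Rightarrow> ('n \<times> 'n) set" where
  "mat_graph A = {(i, j). A $ i $ j \<noteq> 0}"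

text \<open>Paths may be trivial: reflexive transitive closure of the edge relation.\<close>
definition wcdd :: "real^'n^'n \<Rightarrow> bool" where
  "wcdd A \<longleftrightarrow> wdd A \<and> (\<forall>r. \<exists>s. (r, s) \<in> (mat_graph A)\<^sup>* \<and> sdd_row A s)"

definition monotone_mat :: "real^'n^'n \<Rightarrow> bool" where
  "monotone_mat A \<longleftrightarrow> (\<forall>v :: real^'n. (\<forall>i. (A *v v) $ i \<ge> 0) \<longrightarrow> (\<forall>i. v $ i \<ge> 0))"

definition z_matrix :: "real^'n^'n \<Rightarrow> bool" where
  "z_matrix A \<longleftrightarrow> (\<forall>i j. i \<noteq> j \<longrightarrow> A $ i $ j \<le> 0)"

definition m_matrix :: "real^'n^'n \<Rightarrow> bool" where
  "m_matrix A \<longleftrightarrow> z_matrix A \<and> monotone_mat A"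

end

theory Submission
  imports Defs
begin

lemma mv_comp: "(A *v v) $ i = (\<Sum>j\<in>UNIV. A$i$j * v$j)"
  by (simp add: matrix_vector_mult_def)

lemma split_row: "(\<Sum>j\<in>UNIV. f j) = f i + (\<Sum>j\<in>UNIV-{i}. f j)" for f :: "'n::finite \<Rightarrow> real"
  by (simp add: sum.remove)

lemma abs_sum_z:
  assumes "z_matrix A"
  shows "(\<Sum>j\<in>UNIV-{i}. \<bar>A$i$j\<bar>) = - (\<Sum>j\<in>UNIV-{i}. A$i$j)"
proof -
  have "(\<Sum>j\<in>UNIV-{i}. \<bar>A$i$j\<bar>) = (\<Sum>j\<in>UNIV-{i}. - A$i$j)"
    using assms by (intro sum.cong) (auto simp: z_matrix_def abs_of_nonpos)
  then show ?thesis by (simp add: sum_negf)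
qed

lemma dir1:
  fixes A :: "real^'n^'n"
  assumes w: "wcdd A" and z: "z_matrix A" and d: "\<forall>i. A $ i $ i > 0"
  shows "monotone_mat A"
  unfolding monotone_mat_def
proof (intro allI impI)
  fix v :: "real^'n" and i0
  assume Av: "\<forall>i. (A *v v) $ i \<ge> 0"
  show "v $ i0 \<ge> 0"
  proof (rule ccontr)
    assume neg: "\<not> v $ i0 \<ge> 0"
    define m where "m = Min (range (\<lambda>i. v$i))"
    have mle: "m \<le> v$j" for j unfolding m_def by simp
    have "m \<in> range (\<lambda>i. v$i)" unfolding m_def by (intro Min_in) auto
    then obtain r where r: "v$r = m" by auto
    have mneg: "m < 0" using mle[of i0] neg by simp
    define S where "S = {i. v$i = m}"
    have key: "\<not> sdd_row A i \<and> (\<forall>j. A$i$j \<noteq> 0 \<longrightarrow> j \<in> S)" if iS: "i \<in> S" for i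
    proof -
      have vi: "v$i = m" using iS S_def by simp
      have "0 \<le> (A *v v) $ i" using Av by simp
      also have "\<dots> = A$i$i * m + (\<Sum>j\<in>UNIV-{i}. A$i$j * v$j)"
        by (simp add: mv_comp split_row[of _ i] vi)
      finally have e1: "0 \<le> A$i$i * m + (\<Sum>j\<in>UNIV-{i}. A$i$j * v$j)" .
      have tnn: "A$i$j * m - A$i$j * v$j \<ge> 0" if "j \<in> UNIV-{i}" for j
      proof -
        have "A$i$j \<le> 0" using z that by (auto simp: z_matrix_def)
        then have "A$i$j * v$j \<le> A$i$j * m" using mle[of j] by (simp add: mult_left_mono_neg)
        then show ?thesis by simp
      qed
      define T where "T = (\<Sum>j\<in>UNIV-{i}. A$i$j * m - A$i$j * v$j)"
      have Tnn: "T \<ge> 0" unfolding T_def using tnn by (intro sum_nonneg) auto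
      have T2: "T = m * (\<Sum>j\<in>UNIV-{i}. A$i$j) - (\<Sum>j\<in>UNIV-{i}. A$i$j * v$j)"
        unfolding T_def by (simp add: sum_subtractf sum_distrib_left mult.commute)
      have wr: "\<bar>A$i$i\<bar> \<ge> (\<Sum>j\<in>UNIV-{i}. \<bar>A$i$j\<bar>)" using w by (auto simp: wcdd_def wdd_def wdd_row_def)
      have ab: "\<bar>A$i$i\<bar> = A$i$i" using d by (simp add: abs_of_pos less_imp_le)
      have ss: "(\<Sum>j\<in>UNIV-{i}. \<bar>A$i$j\<bar>) = - (\<Sum>j\<in>UNIV-{i}. A$i$j)" using abs_sum_z[OF z] .
      define D where "D = A$i$i + (\<Sum>j\<in>UNIV-{i}. A$i$j)"
      have Dnn: "D \<ge> 0" using wr ab ss D_def by simp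
      have "0 \<le> m * D - T" using e1 T2 D_def by (simp add: algebra_simps)
      moreover have "m * D \<le> 0" using Dnn mneg by (simp add: mult_nonpos_nonneg less_imp_le)
      ultimately have mD: "m * D = 0" and T0: "T = 0" using Tnn by linarith+
      have D0: "D = 0" using mD mneg by simp
      have nsdd: "\<not> sdd_row A i" using D0 ab ss D_def by (simp add: sdd_row_def)
      have allz: "\<forall>j\<in>UNIV-{i}. A$i$j * m - A$i$j * v$j = 0"
        using T0 tnn unfolding T_def by (subst sum_nonneg_eq_0_iff[symmetric]) auto
      have "j \<in> S" if "A$i$j \<noteq> 0" for j
      proof (cases "j = i")
        case True then show ?thesis using iS by simp
      next
        case False
        then have "A$i$j * (m - v$j) = 0" using allz by (simp add: algebra_simps)
        then show ?thesis using that S_def by simp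
      qed
      then show ?thesis using nsdd by blast
    qed
    obtain s where rs: "(r, s) \<in> (mat_graph A)\<^sup>*" and ss: "sdd_row A s"
      using w by (auto simp: wcdd_def)
    have "s \<in> S" using rs
    proof (induction rule: rtrancl_induct)
      case base then show ?case using r S_def by simp
    next
      case (step y z) then show ?case using key by (auto simp: mat_graph_def)
    qed
    then show False using key ss by blast
  qed
qed

lemma diag_pos:
  fixes A :: "real^'n^'n"
  assumes m: "m_matrix A"
  shows "A$i$i > 0"
proof (rule ccontr)
  assume "\<not> A$i$i > 0"
  define v :: "real^'n" where "v = (\<chi> j. if j = i then -1 else 0)"
  have "(A *v v) $ k = - A$k$i" for k
    by (simp add: mv_comp v_def if_distrib cong: if_cong)
  then have "\<forall>k. (A *v v) $ k \<ge> 0" using m \<open>\<not> A$i$i > 0\<close>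
    by (metis linorder_not_less m_matrix_def neg_0_le_iff_le z_matrix_def)
  then have "v $ i \<ge> 0" using m by (auto simp: m_matrix_def monotone_mat_def)
  then show False by (simp add: v_def)
qed

lemma dir2:
  fixes A :: "real^'n^'n"
  assumes wd: "wdd A" and m: "m_matrix A"
  shows "wcdd A"
  unfolding wcdd_def
proof (intro conjI allI wd)
  fix r
  show "\<exists>s. (r, s) \<in> (mat_graph A)\<^sup>* \<and> sdd_row A s"
  proof (rule ccontr)
    assume nex: "\<not> ?thesis"
    have z: "z_matrix A" using m by (simp add: m_matrix_def)
    define R where "R = {s. (r, s) \<in> (mat_graph A)\<^sup>*}"
    have closed: "A$k$j = 0" if "k \<in> R" "j \<notin> R" for k j
    proof (rule ccontr)
      assume "A$k$j \<noteq> 0"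
      then have "(k,j) \<in> mat_graph A" by (simp add: mat_graph_def)
      then have "j \<in> R" using that(1) R_def by (auto intro: rtrancl_into_rtrancl)
      then show False using that by simp
    qed
    define v :: "real^'n" where "v = (\<chi> j. if j \<in> R then -1 else 0)"
    have comp: "(A *v v) $ k = - (\<Sum>j\<in>R. A$k$j)" for k
    proof -
      have "(A *v v) $ k = (\<Sum>j\<in>UNIV. if j \<in> R then - A$k$j else 0)"
        by (simp add: mv_comp v_def if_distrib cong: if_cong)
      also have "\<dots> = (\<Sum>j\<in>R. - A$k$j)" by (simp add: sum.inter_restrict[symmetric])
      finally show ?thesis by (simp add: sum_negf)
    qed
    have "(A *v v) $ k \<ge> 0" for k
    proof (cases "k \<in> R")
      case False
      have "(\<Sum>j\<in>R. A$k$j) \<le> 0" using z False by (intro sum_nonpos) (metis z_matrix_def)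
      then show ?thesis using comp by simp
    next
      case True
      have "(\<Sum>j\<in>R. A$k$j) = (\<Sum>j\<in>UNIV. A$k$j)"
        using closed True by (intro sum.mono_neutral_left) auto
      also have "\<dots> = A$k$k + (\<Sum>j\<in>UNIV-{k}. A$k$j)" by (rule split_row)
      finally have e: "(\<Sum>j\<in>R. A$k$j) = A$k$k + (\<Sum>j\<in>UNIV-{k}. A$k$j)" .
      have "\<not> sdd_row A k" using nex True R_def by auto
      then have "\<bar>A$k$k\<bar> \<le> (\<Sum>j\<in>UNIV-{k}. \<bar>A$k$j\<bar>)" by (simp add: sdd_row_def)
      moreover have "\<bar>A$k$k\<bar> = A$k$k" using diag_pos[OF m, of k] by simp
      ultimately have "A$k$k + (\<Sum>j\<in>UNIV-{k}. A$k$j) \<le> 0" using abs_sum_z[OF z, of k] by simp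
      then show ?thesis using comp e by simp
    qed
    then have "v $ r \<ge> 0" using m by (auto simp: m_matrix_def monotone_mat_def)
    moreover have "r \<in> R" by (simp add: R_def)
    ultimately show False by (simp add: v_def)
  qed
qed

theorem theorem3p5:
  fixes A :: "real^'n^'n"
  shows "(wcdd A \<and> z_matrix A \<and> (\<forall>i. A $ i $ i > 0)) \<longleftrightarrow> (wdd A \<and> m_matrix A)"
  using dir1[of A] dir2[of A] diag_pos[of A] by (auto simp: m_matrix_def wcdd_def)

end
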